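(* Let $\vartheta\in\Theta$ and let $\Delta_T>0$ satisfy $0<\liminf_{T\to\infty}\Delta_T\le\limsup_{T\to\infty}\Delta_T\le\frac{1}{4\vartheta}$. Then $$\liminf_{T\to\infty}\frac{I_{T,0}(\vartheta)^{-1}+I_{T,\infty}(\vartheta)^{-1}}{I_{T,\Delta_T}(\vartheta)^{-1}}>1,$$ where $I_{T,0}(\vartheta)=T/\vartheta$, $I_{T,\infty}(\vartheta)=\frac{T\Delta_T^{-1}}{2\vartheta^2}$ and $I_{T,\Delta}(\vartheta)=T\Delta\,\varphi(\vartheta,\Delta)$. Equivalently, $\liminf_{T\to\infty}\vartheta\Delta_T(1+2\vartheta\Delta_T)\,\varphi(\vartheta,\Delta_T)>1$.
   Context: Under $\mathbb P_\vartheta$, $X_t=\sum_{i=1}^{N_t}\varepsilon_i$ ($X_0=0$), with $(N_t)$ a homogeneous Poisson process of intensity $\vartheta\in\Theta\subseteq(0,\infty)$ and $\varepsilon_i$ i.i.d., independent of $(N_t)$, $\mathbb P(\varepsilon_i=\pm1)=1/2$. Then $\mathbb P_\vartheta(X_\Delta=k)=e^{-\vartheta\Delta}\mathcal I_{|k|}(\vartheta\Delta)$, $k\in\mathbb Z$, with $\mathcal I_\nu(x)=\sum_{m\ge0}\frac{(x/2)^{2m+\nu}}{m!\,\Gamma(\nu+m+1)}$ the modified Bessel function of the first kind. Set $h_\Delta(\vartheta,k)=\mathcal I_{|k|+1}(\vartheta\Delta)/\mathcal I_{|k|}(\vartheta\Delta)$ and $\varphi(\vartheta,\Delta)=\mathbb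 E_\vartheta\big[\big(h_\Delta(\vartheta,X_\Delta)+(\vartheta\Delta)^{-1}|X_\Delta|-1\big)^2\big]$. *)

theory Defs
  imports "HOL-Analysis.Analysis"
begin

text \<open>Modified Bessel function of the first kind of integer order n \<ge> 0:
  I_n(x) = sum_{m\<ge>0} (x/2)^(2m+n) / (m! Gamma(n+m+1)), with Gamma(n+m+1) = (n+m)!.\<close>
definition besselI :: "nat \<Rightarrow> real \<Rightarrow> real" where
  "besselI n x = (\<Sum>m. (x / 2) ^ (2 * m + n) / (fact m * fact (n + m)))"

text \<open>P_theta(X_Delta = k) = exp(-theta Delta) I_{|k|}(theta Delta).\<close>
definition pX :: "real \<Rightarrow> real \<Rightarrow> int \<Rightarrow> real" where
  "pX \<theta> \<Delta> k = exp (- \<theta> * \<Delta>) * besselI (nat \<bar>k\<bar>) (\<theta> * \<Delta>)"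

definition hD :: "real \<Rightarrow> real \<Rightarrow> int \<Rightarrow> real" where
  "hD \<Delta> \<theta> k = besselI (nat \<bar>k\<bar> + 1) (\<theta> * \<Delta>) / besselI (nat \<bar>k\<bar>) (\<theta> * \<Delta>)"

text \<open>phi(theta,Delta) = E_theta[(h_Delta(theta,X_Delta) + |X_Delta|/(theta Delta) - 1)^2],
  written as the sum over the law of X_Delta on the integers.\<close>
definition phi :: "real \<Rightarrow> real \<Rightarrow> real" where
  "phi \<theta> \<Delta> = (\<Sum>\<^sub>\<infinity>k\<in>(UNIV::int set).
      pX \<theta> \<Delta> k * (hD \<Delta> \<theta> k + \<bar>real_of_int k\<bar> / (\<theta> * \<Delta>) - 1)^2)"

definition I0 :: "real \<Rightarrow> real \<Rightarrow> real" where
  "I0 T \<theta> = T / \<theta>"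

definition Iinf :: "real \<Rightarrow> real \<Rightarrow> real \<Rightarrow> real" where
  "Iinf T \<Delta> \<theta> = T * inverse \<Delta> / (2 * \<theta>^2)"

definition IDelta :: "real \<Rightarrow> real \<Rightarrow> real \<Rightarrow> real" where
  "IDelta T \<Delta> \<theta> = T * \<Delta> * phi \<theta> \<Delta>"

end

theory Submission
  imports Defs
begin

definition bt :: "nat \<Rightarrow> real \<Rightarrow> nat \<Rightarrow> real" where
  "bt n x m = (x / 2) ^ (2 * m + n) / (fact m * fact (n + m))"

lemma besselI_bt: "besselI n x = suminf (bt n x)"
  unfolding besselI_def bt_def ..

lemma bt_nonneg: "x \<ge> 0 \<Longrightarrow> bt n x m \<ge> 0"
  unfolding bt_def by simp

lemma bt_pos: "x > 0 \<Longrightarrow> bt n x m > 0"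
  unfolding bt_def by simp

lemma exp_sums: "(\<lambda>m. (y::real) ^ m / fact m) sums exp y"
  using exp_converges[of y] by (simp add: divide_inverse_commute)

lemma exp_summ: "summable (\<lambda>m. (y::real) ^ m / fact m)"
  using exp_sums sums_summable by blast

lemma bt_le: assumes "x \<ge> 0"
  shows "bt n x m \<le> (x/2)^n / fact n * (((x/2)^2) ^ m / fact m)"
proof -
  have e0: "(x/2)^(2*m) = ((x/2)^2)^m" by (simp add: power_mult)
  have e: "(x/2)^(2*m+n) = (x/2)^n * ((x/2)^2)^m"
    unfolding power_add e0 by (simp add: mult.commute)
  have "fact n * fact m \<le> (fact m * fact (n + m) :: real)"
    using fact_mono[of n "n+m"] by (simp add: mult.commute)
  moreover have "0 < (fact n * fact m :: real)" by simp
  moreover have "0 \<le> (x/2)^(2*m+n)" using assms by simp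
  ultimately have "bt n x m \<le> (x/2)^(2*m+n) / (fact n * fact m)"
    unfolding bt_def by (intro divide_left_mono) auto
  also have "\<dots> = (x/2)^n / fact n * (((x/2)^2) ^ m / fact m)"
    using e by simp
  finally show ?thesis .
qed

lemma bt_summable: assumes "x \<ge> 0" shows "summable (bt n x)"
proof (rule summable_comparison_test'[where N=0])
  show "summable (\<lambda>m. (x/2)^n / fact n * (((x/2)^2) ^ m / fact m))"
    by (intro summable_mult exp_summ)
  show "norm (bt n x m) \<le> (x/2)^n / fact n * (((x/2)^2) ^ m / fact m)" for m
    using bt_le[OF assms] bt_nonneg[OF assms] by simp
qed

lemma besselI_pos: "x > 0 \<Longrightarrow> besselI n x > 0"
  unfolding besselI_bt by (rule suminf_pos) (auto intro: bt_summable bt_pos)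

lemma besselI0_ge: assumes "x > 0" shows "besselI 0 x \<ge> 1"
proof -
  have "sum (bt 0 x) {0} \<le> suminf (bt 0 x)"
    by (rule sum_le_suminf) (use assms in \<open>auto intro: bt_summable bt_nonneg\<close>)
  then show ?thesis unfolding besselI_bt by (simp add: bt_def)
qed

lemma besselI_bound: assumes "x > 0"
  shows "besselI n x \<le> (x/2)^n / fact n * exp ((x/2)^2)"
proof -
  have "besselI n x \<le> (\<Sum>m. (x/2)^n / fact n * (((x/2)^2) ^ m / fact m))"
    unfolding besselI_bt
  proof (rule suminf_le)
    fix m show "bt n x m \<le> (x/2)^n / fact n * (((x/2)^2) ^ m / fact m)"
      by (rule bt_le) (use assms in simp)
  next
    show "summable (bt n x)" by (rule bt_summable) (use assms in simp)
  next
    show "summable (\<lambda>m. (x/2)^n / fact n * (((x/2)^2) ^ m / fact m))"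
      by (intro summable_mult exp_summ)
  qed
  also have "\<dots> = (x/2)^n / fact n * (\<Sum>m. ((x/2)^2) ^ m / fact m)"
    by (rule suminf_mult) (rule exp_summ)
  also have "(\<Sum>m. ((x/2)^2) ^ m / fact m) = exp ((x/2)^2)"
    using exp_sums[of "(x/2)^2"] sums_unique by metis
  finally show ?thesis .
qed

lemma besselI_ratio: assumes "x > 0"
  shows "besselI (Suc n) x \<le> x/2 * besselI n x"
proof -
  have "besselI (Suc n) x \<le> (\<Sum>m. x/2 * bt n x m)"
    unfolding besselI_bt
  proof (rule suminf_le)
    fix m
    have "fact (n+m) \<le> (fact (Suc n + m) :: real)" by (intro fact_mono) simp
    hence "(x/2)^(2*m+Suc n) / (fact m * fact (Suc n + m)) \<le> (x/2)^(2*m+Suc n) / (fact m * fact (n + m))"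
      using assms by (intro divide_left_mono mult_left_mono) auto
    thus "bt (Suc n) x m \<le> x/2 * bt n x m" unfolding bt_def by (simp add: mult.commute)
  qed (use assms in \<open>auto intro: bt_summable summable_mult\<close>)
  also have "\<dots> = x/2 * besselI n x" unfolding besselI_bt
    by (rule suminf_mult) (use assms in \<open>auto intro: bt_summable\<close>)
  finally show ?thesis .
qed

lemma aux: fixes y A B x a1 a2 c :: real
  assumes "A>0" "B>0" "a1>0" "a2>0" "x>0" "a2 - a1 = c"
  shows "y/(a1*A*B) - y/(A*(a2*B)) = 2*c/x*(y*(x/2)/(a1*A*(a2*B)))"
proof -
  define D where "D = a1*A*(a2*B)"
  have D: "D > 0" using assms unfolding D_def by simp
  have 1: "y/(a1*A*B) = y*a2/D" using assms(1-5) unfolding D_def by (simp add: field_simps)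
  have 2: "y/(A*(a2*B)) = y*a1/D" using assms(1-5) unfolding D_def by (simp add: field_simps)
  have 3: "2*c/x*(y*(x/2)/D) = c*y/D" using assms by (simp add: field_simps)
  show ?thesis unfolding D_def[symmetric] 1 2 3 using assms(6)
    by (simp add: diff_divide_distrib[symmetric] algebra_simps)
qed

lemma besselI_rec: assumes "x > 0"
  shows "besselI j x - besselI (j+2) x = 2 * real (j+1) / x * besselI (j+1) x"
proof -
  have sj: "summable (bt j x)" "summable (bt (j+2) x)" "summable (bt (j+1) x)"
    using assms by (auto intro: bt_summable)
  have key: "bt j x (Suc m) - bt (j+2) x m = 2 * real (j+1) / x * bt (j+1) x (Suc m)" for m
  proof -
    have f1: "fact (Suc m) = real (Suc m) * fact m" by simp
    have f2: "fact (j + 2 + m) = real (j+m+2) * (fact (j + Suc m) :: real)"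
      by (metis add_2_eq_Suc' add_Suc_right fact_Suc of_nat_fact add.commute add.left_commute)
    have f3: "fact (j + 1 + Suc m) = (fact (j + 2 + m) :: real)"
      by (simp add: add.commute add.left_commute)
    have p1: "(x/2)^(2 * Suc m + j) = (x/2)^(2*m+j+2)" by (simp add: algebra_simps)
    have p2: "(x/2)^(2 * m + (j+2)) = (x/2)^(2*m+j+2)" by (simp add: algebra_simps)
    have p3: "(x/2)^(2 * Suc m + (j+1)) = (x/2)^(2*m+j+2) * (x/2)" by (simp add: algebra_simps)
    define y where "y = (x/2)^(2*m+j+2)"
    show ?thesis
      unfolding bt_def p1 p2 p3 f3 f2 f1 y_def[symmetric]
      by (rule aux) (use assms in auto)
  qed
  have "besselI j x - besselI (j+2) x = bt j x 0 + ((\<Sum>m. bt j x (Suc m)) - (\<Sum>m. bt (j+2) x m))"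
    using suminf_split_head[OF sj(1)] unfolding besselI_bt by simp
  also have "(\<Sum>m. bt j x (Suc m)) - (\<Sum>m. bt (j+2) x m) = (\<Sum>m. bt j x (Suc m) - bt (j+2) x m)"
    by (rule suminf_diff) (use sj in \<open>auto simp: summable_Suc_iff\<close>)
  also have "\<dots> = (\<Sum>m. 2 * real (j+1) / x * bt (j+1) x (Suc m))" by (simp only: key)
  also have "\<dots> = 2 * real (j+1) / x * (\<Sum>m. bt (j+1) x (Suc m))"
    by (rule suminf_mult) (use sj in \<open>auto simp: summable_Suc_iff\<close>)
  also have "(\<Sum>m. bt (j+1) x (Suc m)) = besselI (j+1) x - bt (j+1) x 0"
    using suminf_split_head[OF sj(3)] unfolding besselI_bt by simp
  also have "bt j x 0 = 2 * real (j+1) / x * bt (j+1) x 0"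
  proof -
    have a: "bt j x 0 = (x/2)^j / fact j" by (simp add: bt_def)
    have b: "bt (j+1) x 0 = (x/2)^j * (x/2) / (real (j+1) * fact j)"
      unfolding bt_def by (simp add: mult.commute)
    define z where "z = (x/2)^j"
    define F where "F = (fact j :: real)"
    have "F > 0" unfolding F_def by simp
    have g: "\<And>r::real. r > 0 \<Longrightarrow> 2 * r / x * (z * (x/2) / (r * F)) = z / F"
      using \<open>F > 0\<close> assms by (simp add: field_simps)
    show ?thesis unfolding a b z_def[symmetric] F_def[symmetric]
      by (rule g[symmetric]) simp
  qed
  finally have h: "besselI j x - besselI (j+2) x = 2 * real (j+1) / x * bt (j+1) x 0 + 2 * real (j+1) / x * (besselI (j+1) x - bt (j+1) x 0)" .
  have gen: "\<And>c b I::real. c*b + c*(I-b) = c*I" by (simp add: algebra_simps)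
  show ?thesis unfolding h gen ..
qed


definition PP :: "real \<Rightarrow> int \<Rightarrow> real" where
  "PP x k = exp (-x) * besselI (nat \<bar>k\<bar>) x"
definition SS :: "real \<Rightarrow> int \<Rightarrow> real" where
  "SS x k = besselI (nat \<bar>k\<bar> + 1) x / besselI (nat \<bar>k\<bar>) x + \<bar>real_of_int k\<bar> / x - 1"

lemma aux2: fixes x A B C e r :: real
  assumes "x > 0" "A - B = 2*r/x*C" shows "r*(e*C) = x/2*(e*A - e*B)"
proof -
  from assms(2) have hA: "A = B + 2*r/x*C" by simp
  show ?thesis unfolding hA using assms(1) by (simp add: field_simps)
qed

lemma aux3: fixes x A B C e r :: real
  assumes "x > 0" "C > 0" "A - B = 2*r/x*C" shows "e*C*(B/C + r/x - 1) = (e*A + e*B)/2 - e*C"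
proof -
  from assms(3) have hA: "A = B + 2*r/x*C" by simp
  show ?thesis unfolding hA using assms(1,2) by (simp add: field_simps)
qed

lemma int_cases3: obtains (pos) j where "k = int j + 1" | (zero) "k = 0" | (neg) j where "k = - (int j + 1)"
proof -
  consider "k > 0" | "k = 0" | "k < 0" by linarith
  then show ?thesis
  proof cases
    case 1 then have "k = int (nat (k-1)) + 1" by simp
    then show ?thesis using that(1) by blast
  next
    case 2 then show ?thesis using that(2) by blast
  next
    case 3 then have "k = - (int (nat (-k-1)) + 1)" by simp
    then show ?thesis using that(3) by blast
  qed
qed

lemma PP_R1: assumes "x > 0"
  shows "real_of_int k * PP x k = x/2 * (PP x (k-1) - PP x (k+1))"
proof (cases k rule: int_cases3)
  case (pos j)
  have "real (j+1) * (exp (-x) * besselI (j+1) x) = x/2 * (exp (-x) * besselI j x - exp (-x) * besselI (j+2) x)"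
    by (rule aux2[OF assms besselI_rec[OF assms]])
  then show ?thesis using pos unfolding PP_def
    by (simp add: nat_add_distrib add.commute)
next
  case zero
  then show ?thesis unfolding PP_def by simp
next
  case (neg j)
  have "real (j+1) * (exp (-x) * besselI (j+1) x) = x/2 * (exp (-x) * besselI j x - exp (-x) * besselI (j+2) x)"
    by (rule aux2[OF assms besselI_rec[OF assms]])
  then have "- real (j+1) * (exp (-x) * besselI (j+1) x) = x/2 * (exp (-x) * besselI (j+2) x - exp (-x) * besselI j x)"
    by (simp add: algebra_simps)
  moreover have "nat \<bar>- (int j + 1) - 1\<bar> = j + 2" "nat \<bar>- (int j + 1) + 1\<bar> = j" "nat \<bar>- (int j + 1)\<bar> = j + 1"
    by auto
  ultimately show ?thesis using neg unfolding PP_def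
    by (simp; simp add: algebra_simps)
qed

lemma PP_R2: assumes "x > 0"
  shows "PP x k * SS x k = (PP x (k-1) + PP x (k+1))/2 - PP x k"
proof (cases k rule: int_cases3)
  case (pos j)
  have "exp (-x) * besselI (j+1) x * (besselI (j+2) x / besselI (j+1) x + real (j+1) / x - 1)
       = (exp (-x) * besselI j x + exp (-x) * besselI (j+2) x)/2 - exp (-x) * besselI (j+1) x"
    by (rule aux3[OF assms besselI_pos[OF assms] besselI_rec[OF assms]])
  moreover have "nat \<bar>int j + 1 - 1\<bar> = j" "nat \<bar>int j + 1 + 1\<bar> = j + 2" "nat \<bar>int j + 1\<bar> = j + 1"
    "\<bar>real_of_int (int j + 1)\<bar> = real (j+1)"
    by auto
  ultimately show ?thesis using pos unfolding PP_def SS_def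
    by (simp add: add.commute)
next
  case zero
  have "besselI 0 x \<noteq> 0" using besselI_pos[OF assms] by (metis less_irrefl)
  then show ?thesis unfolding PP_def SS_def zero by (simp add: field_simps)
next
  case (neg j)
  have "exp (-x) * besselI (j+1) x * (besselI (j+2) x / besselI (j+1) x + real (j+1) / x - 1)
       = (exp (-x) * besselI j x + exp (-x) * besselI (j+2) x)/2 - exp (-x) * besselI (j+1) x"
    by (rule aux3[OF assms besselI_pos[OF assms] besselI_rec[OF assms]])
  moreover have "nat \<bar>- (int j + 1) - 1\<bar> = j + 2" "nat \<bar>- (int j + 1) + 1\<bar> = j" "nat \<bar>- (int j + 1)\<bar> = j + 1"
    "\<bar>real_of_int (- (int j + 1))\<bar> = real (j+1)"
    by auto
  ultimately show ?thesis using neg unfolding PP_def SS_def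
    by (simp add: add.commute)
qed

lemma pow4: "1 + real n ^ 2 \<le> 4 ^ n"
proof (induction n)
  case 0 then show ?case by simp
next
  case (Suc n)
  have "1 + real (Suc n) ^ 2 \<le> 4 * (1 + real n ^ 2)"
  proof -
    have h: "0 \<le> (real n - 1)*(real n - 1) + 2*(real n * real n)" by simp
    then show ?thesis by (simp add: power2_eq_square algebra_simps)
  qed
  also have "\<dots> \<le> 4 * 4 ^ n" using Suc by simp
  finally show ?case by simp
qed

lemma pow16: "(1 + real n ^ 2) ^ 2 \<le> 16 ^ n"
proof -
  have "(1 + real n ^ 2) ^ 2 \<le> (4 ^ n) ^ 2" by (rule power_mono[OF pow4]) simp
  also have "((4::real) ^ n) ^ 2 = 16 ^ n"
    by (simp add: power2_eq_square power_mult_distrib[symmetric])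
  finally show ?thesis .
qed

lemma F_summ: assumes "x > 0"
  shows "summable (\<lambda>n. exp (-x) * besselI n x * (1 + real n ^ 2) ^ 2)"
proof (rule summable_comparison_test'[where N=0])
  show "summable (\<lambda>n. exp (-x) * exp ((x/2)^2) * ((8*x) ^ n / fact n))"
    by (intro summable_mult exp_summ)
  fix n
  have b: "0 \<le> besselI n x" using besselI_pos[OF assms] less_imp_le by blast
  have "exp (-x) * besselI n x * (1 + real n ^ 2) ^ 2 \<le> exp (-x) * ((x/2)^n / fact n * exp ((x/2)^2)) * 16 ^ n"
    by (intro mult_mono mult_left_mono besselI_bound[OF assms] pow16) (use b assms in auto)
  also have "\<dots> = exp (-x) * exp ((x/2)^2) * ((8*x) ^ n / fact n)"
  proof -
    have e1: "(x/2)^n * 16^n = (x/2*16)^n" by (rule power_mult_distrib[symmetric])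
    have e2: "x/2*16 = 8*x" by simp
    have g: "\<And>a p f E q::real. a*(p/f*E)*q = a*E*((p*q)/f)" by (simp add: mult_ac divide_inverse)
    show ?thesis unfolding g e1 e2 ..
  qed
  finally show "norm (exp (-x) * besselI n x * (1 + real n ^ 2) ^ 2) \<le> exp (-x) * exp ((x/2)^2) * ((8*x) ^ n / fact n)"
    using b by simp
qed

lemma int_summable:
  fixes F :: "nat \<Rightarrow> real"
  assumes "\<And>n. F n \<ge> 0" "summable F"
  shows "(\<lambda>k::int. F (nat \<bar>k\<bar>)) summable_on UNIV"
proof -
  have F: "F summable_on UNIV" by (rule summable_nonneg_imp_summable_on) (use assms in auto)
  have 1: "(\<lambda>k::int. F (nat \<bar>k\<bar>)) summable_on (range int)"
    by (subst summable_on_reindex) (use F in \<open>auto simp: o_def\<close>)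
  have 2: "(\<lambda>k::int. F (nat \<bar>k\<bar>)) summable_on (range (\<lambda>n. - int n))"
    by (subst summable_on_reindex) (use F in \<open>auto simp: o_def inj_on_def\<close>)
  have "k \<in> range int \<union> range (\<lambda>n. - int n)" for k :: int
  proof (cases "k \<ge> 0")
    case True then have "k = int (nat k)" by simp
    then show ?thesis by (metis UnI1 rangeI)
  next
    case False then have "k = - int (nat (-k))" by simp
    then show ?thesis by (metis UnI2 rangeI)
  qed
  then have U: "(UNIV::int set) = range int \<union> range (\<lambda>n. - int n)" by blast
  show ?thesis unfolding U by (rule summable_on_union[OF 1 2])
qed

lemma Q_summ: assumes "x > 0"
  shows "(\<lambda>k. PP x k * (1 + (real_of_int k)^2)^2) summable_on UNIV"
proof -
  have "(\<lambda>k::int. exp (-x) * besselI (nat \<bar>k\<bar>) x * (1 + real (nat \<bar>k\<bar>) ^ 2) ^ 2) summable_on UNIV"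
  proof (rule int_summable[OF _ F_summ[OF assms]])
    fix n
    have "0 \<le> besselI n x" using besselI_pos[OF assms] less_imp_le by blast
    then show "0 \<le> exp (-x) * besselI n x * (1 + real n ^ 2) ^ 2" by simp
  qed
  moreover have "real (nat \<bar>k\<bar>) ^ 2 = (real_of_int k)^2" for k :: int
    by simp
  ultimately show ?thesis unfolding PP_def by simp
qed

lemma dom_summ:
  fixes f g :: "int \<Rightarrow> real"
  assumes "f summable_on UNIV" "\<And>k. \<bar>g k\<bar> \<le> C * f k"
  shows "g summable_on UNIV"
proof -
  have "(\<lambda>k. C * f k) summable_on UNIV" by (rule summable_on_cmult_right[OF assms(1)])
  then have "Infinite_Sum.abs_summable_on (\<lambda>k. C * f k) UNIV" by (rule summable_on_iff_abs_summable_on_real[THEN iffD1])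
  then have "Infinite_Sum.abs_summable_on g UNIV"
  proof (rule Infinite_Sum.abs_summable_on_comparison_test)
    fix k show "norm (g k) \<le> norm (C * f k)"
      using abs_ge_self[of "C * f k"] assms(2)[of k] unfolding real_norm_def by linarith
  qed
  then show ?thesis by (rule summable_on_iff_abs_summable_on_real[THEN iffD2])
qed

lemma has_sum_shift:
  fixes f :: "int \<Rightarrow> real"
  assumes "(f has_sum s) UNIV" shows "((\<lambda>k. f (k + d)) has_sum s) UNIV"
proof -
  have "bij_betw (\<lambda>k. k + d) UNIV UNIV"
    by (rule bij_betwI[where g="\<lambda>k. k - d"]) auto
  then show ?thesis using has_sum_reindex_bij_betw assms by blast
qed

lemma has_sum_diff':
  fixes f g :: "int \<Rightarrow> real"
  assumes "(f has_sum a) A" "(g has_sum b) A" shows "((\<lambda>k. f k - g k) has_sum (a - b)) A"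
  using has_sum_add[OF assms(1) has_sum_uminusI[OF assms(2)]] by simp


definition phiZ :: "int \<times> nat \<Rightarrow> nat \<times> nat" where
  "phiZ km = (if fst km \<ge> 0 then (snd km, snd km + nat (fst km)) else (snd km + nat (- fst km), snd km))"
definition psiZ :: "nat \<times> nat \<Rightarrow> int \<times> nat" where
  "psiZ ab = (int (snd ab) - int (fst ab), min (fst ab) (snd ab))"

lemma phiZ_bij: "bij_betw phiZ UNIV UNIV"
proof (rule bij_betwI[where g = psiZ])
  show "phiZ \<in> UNIV \<rightarrow> UNIV" "psiZ \<in> UNIV \<rightarrow> UNIV" by auto
  show "psiZ (phiZ km) = km" for km
    by (cases km) (auto simp: phiZ_def psiZ_def)
  show "phiZ (psiZ ab) = ab" for ab
    by (cases ab) (auto simp: phiZ_def psiZ_def)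
qed

lemma besselI_sum: assumes x: "x > 0"
  shows "((\<lambda>k::int. besselI (nat \<bar>k\<bar>) x) has_sum exp x) UNIV"
proof -
  define y where "y = x/2"
  have y: "y > 0" unfolding y_def using x by simp
  define f2 where "f2 ab = y ^ fst ab / fact (fst ab) * (y ^ snd ab / fact (snd ab))" for ab :: "nat \<times> nat"
  have inner: "((\<lambda>b. f2 (a, b)) has_sum (y^a / fact a * exp y)) UNIV" for a
  proof -
    have "(\<lambda>b. y^a / fact a * (y ^ b / fact b)) sums (y^a / fact a * exp y)"
      by (rule sums_mult[OF exp_sums])
    then show ?thesis unfolding f2_def using y by (intro sums_nonneg_imp_has_sum) auto
  qed
  have outer: "((\<lambda>a. y^a / fact a * exp y) has_sum (exp y * exp y)) UNIV"
  proof -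
    have "(\<lambda>a. y^a / fact a * exp y) sums (exp y * exp y)"
      by (rule sums_mult2[OF exp_sums])
    then show ?thesis using y by (intro sums_nonneg_imp_has_sum) auto
  qed
  have f2s: "f2 summable_on Sigma UNIV (\<lambda>_. UNIV)"
    by (rule summable_on_SigmaI[OF inner]) (use outer y in \<open>auto simp: f2_def intro: has_sum_imp_summable\<close>)
  have f2h: "(f2 has_sum (exp y * exp y)) UNIV"
    using has_sum_SigmaI[OF inner outer f2s] by simp
  have G: "((\<lambda>km. f2 (phiZ km)) has_sum (exp y * exp y)) UNIV"
    using has_sum_reindex_bij_betw[OF phiZ_bij] f2h by blast
  have pw: "y^(2*m + j) = y^m * y^(m+j)" for m j :: nat by (metis power_add mult_2 add.assoc)
  have eq: "f2 (phiZ km) = bt (nat \<bar>fst km\<bar>) x (snd km)" for km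
  proof (cases km)
    case (Pair k m)
    show ?thesis
    proof (cases "k \<ge> 0")
      case True
      have "f2 (phiZ km) = y ^ m / fact m * (y ^ (m + nat k) / fact (m + nat k))"
        using True Pair by (simp add: phiZ_def f2_def)
      also have "\<dots> = y ^ (2*m + nat k) / (fact m * fact (nat k + m))"
        unfolding pw by (simp add: add.commute)
      finally show ?thesis using True Pair by (simp add: bt_def y_def)
    next
      case False
      have "f2 (phiZ km) = y ^ (m + nat (-k)) / fact (m + nat (-k)) * (y ^ m / fact m)"
        using False Pair by (simp add: phiZ_def f2_def)
      also have "\<dots> = y ^ (2*m + nat (-k)) / (fact m * fact (nat (-k) + m))"
        unfolding pw by (simp add: add.commute mult.commute)
      finally show ?thesis using False Pair by (simp add: bt_def y_def)
    qed
  qed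
  have G': "((\<lambda>km. bt (nat \<bar>fst km\<bar>) x (snd km)) has_sum (exp y * exp y)) (Sigma UNIV (\<lambda>_. UNIV))"
    using G unfolding eq by simp
  have inner2: "((\<lambda>m. bt (nat \<bar>fst (k, m)\<bar>) x (snd (k, m))) has_sum besselI (nat \<bar>k\<bar>) x) UNIV" for k :: int
    unfolding besselI_bt using x
    by (auto intro!: sums_nonneg_imp_has_sum summable_sums bt_summable bt_nonneg)
  have "((\<lambda>k::int. besselI (nat \<bar>k\<bar>) x) has_sum (exp y * exp y)) UNIV"
    by (rule has_sum_SigmaD[OF G']) (use inner2 in simp)
  moreover have "exp y * exp y = exp x" unfolding y_def by (simp add: exp_add[symmetric])
  ultimately show ?thesis by simp
qed

lemma PP_sum: assumes "x > 0" shows "(PP x has_sum 1) UNIV"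
proof -
  have "((\<lambda>k. exp (-x) * besselI (nat \<bar>k\<bar>) x) has_sum (exp (-x) * exp x)) UNIV"
    by (rule has_sum_cmult_right[OF besselI_sum[OF assms]])
  then show ?thesis unfolding PP_def by (simp add: exp_minus)
qed

lemma hs_cong: "(f has_sum a) A \<Longrightarrow> (\<And>k. f k = g k) \<Longrightarrow> a = b \<Longrightarrow> (g has_sum b) A"
  using has_sum_cong by metis

lemma hs_cmult: "((f::int\<Rightarrow>real) has_sum a) A \<Longrightarrow> ((\<lambda>k. c * f k) has_sum (c * a)) A"
  by (rule has_sum_cmult_right)

lemma poly_bd: fixes t :: real
  shows "1 + \<bar>t\<bar> \<le> 2*(1+t^2)" "(1+\<bar>t\<bar>)^2 \<le> 2*(1+t^2)" "1+t^2 \<le> (1+t^2)^2"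
    "(1+\<bar>t\<bar>)^3 \<le> 4*(1+t^2)^2"
proof -
  have h: "0 \<le> (\<bar>t\<bar> - 1)^2" by simp
  have t2: "\<bar>t\<bar>^2 = t^2" by simp
  have t0: "0 \<le> t*t" by simp
  have k: "2*\<bar>t\<bar> \<le> 1 + t*t" using h by (simp add: power2_eq_square algebra_simps)
  have t2': "t^2 = t*t" by (simp add: power2_eq_square)
  have e: "(1+\<bar>t\<bar>)^2 = 1 + 2*\<bar>t\<bar> + t*t" by (simp add: power2_eq_square algebra_simps)
  show 1: "1 + \<bar>t\<bar> \<le> 2*(1+t^2)" using k t0 t2' by (smt (verit))
  show 2: "(1+\<bar>t\<bar>)^2 \<le> 2*(1+t^2)" using k t0 t2' e by (smt (verit))
  have u: "1 \<le> 1 + t^2" by simp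
  have "1*(1+t^2) \<le> (1+t^2)*(1+t^2)" by (rule mult_right_mono[OF u]) simp
  then show "1+t^2 \<le> (1+t^2)^2" by (simp only: power2_eq_square mult_1)
  have "(1+\<bar>t\<bar>)^3 = (1+\<bar>t\<bar>) * (1+\<bar>t\<bar>)^2" by (simp add: numeral_3_eq_3 power2_eq_square)
  also have "\<dots> \<le> (2*(1+t^2)) * (2*(1+t^2))"
    by (intro mult_mono 1 2) auto
  also have "\<dots> = 4*(1+t^2)^2" by (simp add: power2_eq_square algebra_simps)
  finally show "(1+\<bar>t\<bar>)^3 \<le> 4*(1+t^2)^2" .
qed

lemma dom_poly:
  assumes "x > 0" "\<And>t::real. \<bar>h t\<bar> \<le> C * (1 + t^2)^2"
  shows "(\<lambda>k. PP x k * h (real_of_int k)) summable_on UNIV"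
proof (rule dom_summ[OF Q_summ[OF assms(1)]])
  fix k
  have p: "0 \<le> PP x k" unfolding PP_def using besselI_pos[OF assms(1)] by (simp add: less_imp_le)
  have "\<bar>PP x k * h (real_of_int k)\<bar> = PP x k * \<bar>h (real_of_int k)\<bar>" using p by (simp add: abs_mult)
  also have "\<dots> \<le> PP x k * (C * (1 + (real_of_int k)^2)^2)" by (rule mult_left_mono[OF assms(2) p])
  finally show "\<bar>PP x k * h (real_of_int k)\<bar> \<le> C * (PP x k * (1 + (real_of_int k)^2)^2)"
    by (simp add: mult_ac)
qed

lemma bd_lin: fixes t c :: real assumes "\<bar>c\<bar> = 1" shows "\<bar>t + c\<bar> \<le> 2 * (1+t^2)^2"
proof -
  have "\<bar>t + c\<bar> \<le> 1 + \<bar>t\<bar>" using assms by linarith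
  also have "\<dots> \<le> 2*(1+t^2)" by (rule poly_bd(1))
  also have "\<dots> \<le> 2*(1+t^2)^2" using poly_bd(3)[of t] by simp
  finally show ?thesis .
qed

lemma bd_cub: fixes t c :: real assumes "\<bar>c\<bar> = 1" shows "\<bar>(t + c)^3\<bar> \<le> 4 * (1+t^2)^2"
proof -
  have a: "\<bar>t + c\<bar> \<le> 1 + \<bar>t\<bar>" using assms by linarith
  have "\<bar>(t + c)^3\<bar> = \<bar>t + c\<bar>^3" by (simp add: power_abs)
  also have "\<dots> \<le> (1 + \<bar>t\<bar>)^3" by (rule power_mono[OF a]) simp
  also have "\<dots> \<le> 4*(1+t^2)^2" by (rule poly_bd(4))
  finally show ?thesis .
qed

lemma bd_sq: fixes t c x :: real assumes "\<bar>c\<bar> = 1" "x > 0" shows "\<bar>(t + c)^2 - x\<bar> \<le> (2 + x) * (1+t^2)^2"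
proof -
  have a: "\<bar>t + c\<bar> \<le> 1 + \<bar>t\<bar>" using assms by linarith
  have "(t+c)^2 = \<bar>t + c\<bar>^2" by simp
  also have "\<dots> \<le> (1 + \<bar>t\<bar>)^2" by (rule power_mono[OF a]) simp
  also have "\<dots> \<le> 2*(1+t^2)" by (rule poly_bd(2))
  finally have b: "(t+c)^2 \<le> 2*(1+t^2)" .
  have c3: "1 \<le> (1+t^2)^2" using poly_bd(3)[of t] by (smt (verit) zero_le_power2)
  have "\<bar>(t + c)^2 - x\<bar> \<le> (t+c)^2 + x" using assms by (simp add: abs_le_iff)
  also have "\<dots> \<le> 2*(1+t^2)^2 + x * (1+t^2)^2"
    using b poly_bd(3)[of t] mult_left_mono[OF c3, of x] assms(2) by (smt (verit))
  finally show ?thesis by (simp add: algebra_simps)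
qed

lemma mom:
  fixes P :: "int \<Rightarrow> real" and g :: "real \<Rightarrow> real"
  assumes R: "\<And>k. real_of_int k * P k = x/2 * (P (k-1) - P (k+1))"
    and a: "((\<lambda>j. P j * g (real_of_int j + 1)) has_sum a) UNIV"
    and b: "((\<lambda>j. P j * g (real_of_int j - 1)) has_sum b) UNIV"
  shows "((\<lambda>k. real_of_int k * P k * g (real_of_int k)) has_sum (x/2*(a-b))) UNIV"
proof -
  have a': "((\<lambda>k. P (k - 1) * g (real_of_int k)) has_sum a) UNIV"
    using has_sum_shift[OF a, of "-1"] by simp
  have b': "((\<lambda>k. P (k + 1) * g (real_of_int k)) has_sum b) UNIV"
    using has_sum_shift[OF b, of "1"] by simp
  have "((\<lambda>k. x/2 * (P (k-1) * g (real_of_int k) - P (k+1) * g (real_of_int k))) has_sum (x/2*(a-b))) UNIV"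
    by (rule has_sum_cmult_right[OF has_sum_diff'[OF a' b']])
  then show ?thesis
  proof (rule hs_cong)
    fix k show "x/2 * (P (k-1) * g (real_of_int k) - P (k+1) * g (real_of_int k)) = real_of_int k * P k * g (real_of_int k)"
      unfolding R by (simp add: algebra_simps)
  qed simp
qed

lemma SS_bound: assumes x: "x > 0"
  shows "\<bar>SS x k\<bar> \<le> (x + 1/x + 1) * (1 + \<bar>real_of_int k\<bar>)"
proof -
  define n where "n = nat \<bar>k\<bar>"
  define r where "r = besselI (n+1) x / besselI n x"
  have In: "besselI n x > 0" by (rule besselI_pos[OF x])
  have r0: "0 \<le> r" unfolding r_def using besselI_pos[OF x, of "n+1"] In by simp
  have r1: "r \<le> x/2" unfolding r_def using besselI_ratio[OF x, of n] In by (simp add: divide_le_eq)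
  have S: "SS x k = r + \<bar>real_of_int k\<bar>/x - 1" unfolding SS_def r_def n_def ..
  have q: "0 \<le> \<bar>real_of_int k\<bar>/x" using x by simp
  have "\<bar>SS x k\<bar> \<le> x/2 + \<bar>real_of_int k\<bar>/x + 1" unfolding S using r0 r1 q by linarith
  also have "\<dots> \<le> (x + 1/x + 1) * (1 + \<bar>real_of_int k\<bar>)"
  proof -
    have "\<bar>real_of_int k\<bar>/x = (1/x) * \<bar>real_of_int k\<bar>" by simp
    moreover have "0 \<le> (x + 1) * \<bar>real_of_int k\<bar>" using x by simp
    ultimately show ?thesis using x by (simp add: algebra_simps)
  qed
  finally show ?thesis .
qed

lemma main_ineq: assumes x: "x > 0"
  shows "(x + 2*x^2) * infsum (\<lambda>k. PP x k * (SS x k)^2) UNIV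
           \<ge> 1 + (x + 2*x^2) * (PP x 0 * (SS x 0 + x/(x+2*x^2))^2)"
proof -
  define P where "P = PP x"
  have R1: "\<And>k. real_of_int k * P k = x/2*(P(k-1) - P(k+1))" unfolding P_def by (rule PP_R1[OF x])
  have R2: "\<And>k. P k * SS x k = (P (k-1) + P (k+1))/2 - P k" unfolding P_def by (rule PP_R2[OF x])
  have h0: "(P has_sum 1) UNIV" unfolding P_def by (rule PP_sum[OF x])
  have Pnn: "\<And>k. 0 \<le> P k" unfolding P_def PP_def using besselI_pos[OF x] by (simp add: less_imp_le)
  have summ: "\<And>h C. (\<And>t. \<bar>h t\<bar> \<le> C*(1+t^2)^2) \<Longrightarrow> (\<lambda>k. P k * h (real_of_int k)) summable_on UNIV"
    unfolding P_def by (rule dom_poly[OF x])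
  have lp: "\<bar>t + 1\<bar> \<le> 2*(1+t^2)^2" for t :: real using bd_lin[of 1 t] by simp
  have lm: "\<bar>t - 1\<bar> \<le> 2*(1+t^2)^2" for t :: real using bd_lin[of "-1" t] by simp
  have cp: "\<bar>(t + 1)^3\<bar> \<le> 4*(1+t^2)^2" for t :: real using bd_cub[of 1 t] by simp
  have cm: "\<bar>(t - 1)^3\<bar> \<le> 4*(1+t^2)^2" for t :: real using bd_cub[of "-1" t] by simp
  have sp: "\<bar>(t + 1)^2 - x\<bar> \<le> (2+x)*(1+t^2)^2" for t :: real using bd_sq[of 1 x t] x by simp
  have sm: "\<bar>(t - 1)^2 - x\<bar> \<le> (2+x)*(1+t^2)^2" for t :: real using bd_sq[of "-1" x t] x by simp

  define a1 where "a1 = infsum (\<lambda>j. P j * (real_of_int j + 1)) UNIV"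
  define a2 where "a2 = infsum (\<lambda>j. P j * (real_of_int j - 1)) UNIV"
  have ha1: "((\<lambda>j. P j * (real_of_int j + 1)) has_sum a1) UNIV"
    unfolding a1_def by (rule has_sum_infsum, rule summ[of "\<lambda>t. t + 1" 2], rule lp)
  have ha2: "((\<lambda>j. P j * (real_of_int j - 1)) has_sum a2) UNIV"
    unfolding a2_def by (rule has_sum_infsum, rule summ[of "\<lambda>t. t - 1" 2], rule lm)
  have "((\<lambda>j. P j * (real_of_int j + 1) - P j * (real_of_int j - 1)) has_sum (a1 - a2)) UNIV"
    by (rule has_sum_diff'[OF ha1 ha2])
  moreover have "((\<lambda>j. P j * (real_of_int j + 1) - P j * (real_of_int j - 1)) has_sum 2) UNIV"
    by (rule hs_cong[OF hs_cmult[OF h0, of 2]]) (simp_all add: algebra_simps)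
  ultimately have a12: "a1 - a2 = 2" using has_sum_unique by blast
  have m2: "((\<lambda>k. real_of_int k * P k * real_of_int k) has_sum x) UNIV"
    using mom[of P x "\<lambda>t. t", OF R1 ha1 ha2] a12 by simp

  define a3 where "a3 = infsum (\<lambda>j. P j * (real_of_int j + 1)^3) UNIV"
  define a4 where "a4 = infsum (\<lambda>j. P j * (real_of_int j - 1)^3) UNIV"
  have ha3: "((\<lambda>j. P j * (real_of_int j + 1)^3) has_sum a3) UNIV"
    unfolding a3_def by (rule has_sum_infsum, rule summ[of "\<lambda>t. (t + 1)^3" 4], rule cp)
  have ha4: "((\<lambda>j. P j * (real_of_int j - 1)^3) has_sum a4) UNIV"
    unfolding a4_def by (rule has_sum_infsum, rule summ[of "\<lambda>t. (t - 1)^3" 4], rule cm)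
  have "((\<lambda>j. P j * (real_of_int j + 1)^3 - P j * (real_of_int j - 1)^3) has_sum (a3 - a4)) UNIV"
    by (rule has_sum_diff'[OF ha3 ha4])
  moreover have "((\<lambda>j. P j * (real_of_int j + 1)^3 - P j * (real_of_int j - 1)^3) has_sum (6*x+2)) UNIV"
  proof (rule hs_cong[OF has_sum_add[OF hs_cmult[OF m2, of 6] hs_cmult[OF h0, of 2]]])
    fix j show "6 * (real_of_int j * P j * real_of_int j) + 2 * P j = P j * (real_of_int j + 1)^3 - P j * (real_of_int j - 1)^3"
      by (simp add: power3_eq_cube algebra_simps)
  qed simp
  ultimately have a34: "a3 - a4 = 6*x+2" using has_sum_unique by blast
  have m4: "((\<lambda>k. real_of_int k * P k * real_of_int k ^ 3) has_sum (x/2*(6*x+2))) UNIV"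
    using mom[of P x "\<lambda>t. t^3", OF R1 ha3 ha4] a34 by simp

  have mf: "((\<lambda>k. P k * (real_of_int k ^ 2 - x)) has_sum 0) UNIV"
  proof (rule hs_cong[OF has_sum_diff'[OF m2 hs_cmult[OF h0, of x]]])
    fix k show "real_of_int k * P k * real_of_int k - x * P k = P k * (real_of_int k ^ 2 - x)"
      by (simp add: power2_eq_square algebra_simps)
  qed simp

  text \<open>score identity\<close>
  define b1 where "b1 = infsum (\<lambda>j. P j * ((real_of_int j + 1)^2 - x)) UNIV"
  define b2 where "b2 = infsum (\<lambda>j. P j * ((real_of_int j - 1)^2 - x)) UNIV"
  have hb1: "((\<lambda>j. P j * ((real_of_int j + 1)^2 - x)) has_sum b1) UNIV"
    unfolding b1_def by (rule has_sum_infsum, rule summ[of "\<lambda>t. (t + 1)^2 - x" "2+x"], rule sp)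
  have hb2: "((\<lambda>j. P j * ((real_of_int j - 1)^2 - x)) has_sum b2) UNIV"
    unfolding b2_def by (rule has_sum_infsum, rule summ[of "\<lambda>t. (t - 1)^2 - x" "2+x"], rule sm)
  have "((\<lambda>j. P j * ((real_of_int j + 1)^2 - x) + P j * ((real_of_int j - 1)^2 - x)) has_sum (b1 + b2)) UNIV"
    by (rule has_sum_add[OF hb1 hb2])
  moreover have "((\<lambda>j. P j * ((real_of_int j + 1)^2 - x) + P j * ((real_of_int j - 1)^2 - x)) has_sum 2) UNIV"
  proof (rule hs_cong[OF has_sum_add[OF hs_cmult[OF m2, of 2] hs_cmult[OF h0, of "2 - 2*x"]]])
    fix j show "2 * (real_of_int j * P j * real_of_int j) + (2 - 2*x) * P j = P j * ((real_of_int j + 1)^2 - x) + P j * ((real_of_int j - 1)^2 - x)"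
      by (simp add: power2_eq_square algebra_simps)
  qed (simp add: algebra_simps)
  ultimately have b12: "b1 + b2 = 2" using has_sum_unique by blast
  have hb1': "((\<lambda>k. P (k - 1) * (real_of_int k ^ 2 - x)) has_sum b1) UNIV"
    using has_sum_shift[OF hb1, of "-1"] by simp
  have hb2': "((\<lambda>k. P (k + 1) * (real_of_int k ^ 2 - x)) has_sum b2) UNIV"
    using has_sum_shift[OF hb2, of "1"] by simp
  have sc: "((\<lambda>k. P k * SS x k * (real_of_int k ^ 2 - x)) has_sum 1) UNIV"
  proof (rule hs_cong[OF has_sum_diff'[OF hs_cmult[OF has_sum_add[OF hb1' hb2'], of "1/2"] mf]])
    fix k show "1/2 * (P (k - 1) * (real_of_int k ^ 2 - x) + P (k + 1) * (real_of_int k ^ 2 - x)) - P k * (real_of_int k ^ 2 - x)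
       = P k * SS x k * (real_of_int k ^ 2 - x)"
      unfolding R2 by (simp add: field_simps)
  qed (use b12 in simp)

  have vf: "((\<lambda>k. P k * (real_of_int k ^ 2 - x)^2) has_sum (x + 2*x^2)) UNIV"
  proof (rule hs_cong[OF has_sum_add[OF has_sum_diff'[OF m4 hs_cmult[OF m2, of "2*x"]] hs_cmult[OF h0, of "x^2"]]])
    fix k show "real_of_int k * P k * real_of_int k ^ 3 - 2 * x * (real_of_int k * P k * real_of_int k) + x^2 * P k
       = P k * (real_of_int k ^ 2 - x)^2"
      by (simp add: power2_eq_square power3_eq_cube algebra_simps)
  qed (simp add: power2_eq_square algebra_simps)

  define K where "K = x + 1/x + 1"
  have phs: "(\<lambda>k. P k * (SS x k)^2) summable_on UNIV"
  proof (rule dom_summ[OF Q_summ[OF x], where C="2*K^2"])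
    fix k
    define t where "t = real_of_int k"
    have Sb: "\<bar>SS x k\<bar> \<le> K * (1 + \<bar>t\<bar>)" unfolding K_def t_def by (rule SS_bound[OF x])
    have "(SS x k)^2 = \<bar>SS x k\<bar>^2" by simp
    also have "\<dots> \<le> (K * (1 + \<bar>t\<bar>))^2" by (rule power_mono[OF Sb]) simp
    also have "\<dots> = K^2 * (1 + \<bar>t\<bar>)^2" by (simp add: power_mult_distrib)
    also have "\<dots> \<le> K^2 * (2*(1+t^2)^2)"
      using poly_bd(2)[of t] poly_bd(3)[of t] by (intro mult_left_mono) auto
    finally have "(SS x k)^2 \<le> 2*K^2*(1+t^2)^2" by simp
    then have "P k * (SS x k)^2 \<le> P k * (2*K^2*(1+t^2)^2)" by (rule mult_left_mono[OF _ Pnn])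
    then show "\<bar>P k * (SS x k)^2\<bar> \<le> 2*K^2 * (PP x k * (1 + (real_of_int k)^2)^2)"
      using Pnn[of k] unfolding t_def P_def by (simp add: mult_ac)
  qed
  define ph where "ph = infsum (\<lambda>k. P k * (SS x k)^2) UNIV"
  have hph: "((\<lambda>k. P k * (SS x k)^2) has_sum ph) UNIV" unfolding ph_def using phs by (rule has_sum_infsum)

  define V where "V = x + 2*x^2"
  have V: "V > 0" unfolding V_def using x by (simp add: add_pos_nonneg)
  define c where "c = 1/V"
  define D where "D k = P k * (SS x k - c * (real_of_int k ^ 2 - x))^2" for k
  have hD: "(D has_sum (ph - 2*c*1 + c^2 * V)) UNIV"
  proof (rule hs_cong[OF has_sum_add[OF has_sum_diff'[OF hph hs_cmult[OF sc, of "2*c"]] hs_cmult[OF vf, of "c^2"]]])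
    fix k show "P k * (SS x k)^2 - 2 * c * (P k * SS x k * (real_of_int k ^ 2 - x)) + c^2 * (P k * (real_of_int k ^ 2 - x)^2) = D k"
      unfolding D_def by (simp add: power2_eq_square algebra_simps)
  qed (simp add: V_def)
  have tot: "ph - 2*c*1 + c^2 * V = ph - 1/V" unfolding c_def using V by (simp add: power2_eq_square field_simps)
  have Dnn: "\<And>k. 0 \<le> D k" unfolding D_def using Pnn by simp
  have "D 0 \<le> ph - 1/V"
    by (rule has_sum_mono_neutral[OF has_sum_finiteI[of "{0}" "D 0" D] hD[unfolded tot]]) (use Dnn in auto)
  moreover have "D 0 = PP x 0 * (SS x 0 + x/(x+2*x^2))^2" unfolding D_def P_def c_def V_def by simp
  ultimately have "ph \<ge> 1/V + PP x 0 * (SS x 0 + x/(x+2*x^2))^2" by simp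
  then have "V * ph \<ge> V * (1/V + PP x 0 * (SS x 0 + x/(x+2*x^2))^2)" using V by (simp add: mult_left_mono)
  also have "V * (1/V + PP x 0 * (SS x 0 + x/(x+2*x^2))^2) = 1 + V * (PP x 0 * (SS x 0 + x/(x+2*x^2))^2)"
    using V by (simp add: field_simps)
  finally show ?thesis unfolding V_def ph_def P_def .
qed


lemma phi_eq: "phi \<theta> \<Delta> = infsum (\<lambda>k. PP (\<theta>*\<Delta>) k * (SS (\<theta>*\<Delta>) k)^2) UNIV"
  unfolding phi_def pX_def hD_def PP_def SS_def by simp

lemma lower: assumes a: "0 < a" and x: "a \<le> x" "x \<le> 1"
  shows "(x + 2*x^2) * infsum (\<lambda>k. PP x k * (SS x k)^2) UNIV \<ge> 1 + a * exp (-1) * (a/6)^2"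
proof -
  have x0: "x > 0" using a x by simp
  define V where "V = x + 2*x^2"
  have V: "V = x * (1 + 2*x)" unfolding V_def by (simp add: power2_eq_square algebra_simps)
  have V0: "V > 0" unfolding V using x0 by (simp add: add_pos_nonneg)
  have I0: "besselI 0 x \<ge> 1" by (rule besselI0_ge[OF x0])
  have I0p: "besselI 0 x > 0" using I0 by simp
  define r where "r = besselI 1 x / besselI 0 x"
  have r0: "0 \<le> r" unfolding r_def using besselI_pos[OF x0, of 1] I0p by simp
  have r1: "r \<le> x/2" unfolding r_def using besselI_ratio[OF x0, of 0] I0p by (simp add: divide_le_eq)
  have S0: "SS x 0 = r - 1" unfolding SS_def r_def by simp
  have xV: "x / V = 1 / (1 + 2*x)" unfolding V using x0 by simp
  have key: "2*x/(1+2*x) - x/2 \<ge> x/6"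
  proof -
    have "2/(1+2*x) \<ge> 2/3" using x0 x by (simp add: divide_simps)
    then have "x * (2/(1+2*x)) \<ge> x * (2/3)" by (rule mult_left_mono) (use x0 in simp)
    moreover have "2*x/(1+2*x) = x*(2/(1+2*x))" by simp
    ultimately show ?thesis by linarith
  qed
  have eqs: "r - 1 + 1/(1+2*x) = r - 2*x/(1+2*x)" using x0 by (simp add: field_simps)
  have "a/6 \<le> \<bar>SS x 0 + x / V\<bar>" unfolding S0 xV eqs using key r1 x by linarith
  then have sq: "(a/6)^2 \<le> (SS x 0 + x / V)^2"
    using power_mono[of "a/6" "\<bar>SS x 0 + x / V\<bar>" 2] a by simp
  have P0: "PP x 0 \<ge> exp (-1)"
  proof -
    have "exp (-1) \<le> exp (-x)" using x by simp
    also have "\<dots> \<le> exp (-x) * besselI 0 x" using I0 by simp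
    finally show ?thesis unfolding PP_def by simp
  qed
  have Va: "a \<le> V" unfolding V_def using x by (smt (verit) zero_le_power2)
  have m1: "exp (-1) * (a/6)^2 \<le> PP x 0 * (SS x 0 + x / V)^2"
    by (rule mult_mono[OF P0 sq]) (use P0 in \<open>auto intro: order.trans[of 0 "exp (-1)"]\<close>)
  have "a * (exp (-1) * (a/6)^2) \<le> V * (PP x 0 * (SS x 0 + x / V)^2)"
    by (rule mult_mono[OF Va m1]) (use V0 in auto)
  then have "a * exp (-1) * (a/6)^2 \<le> V * (PP x 0 * (SS x 0 + x / V)^2)" by (simp add: mult.assoc)
  then show ?thesis using main_ineq[OF x0] unfolding V_def by linarith
qed

theorem theorem5:
  fixes \<theta> :: real and \<Delta> :: "real \<Rightarrow> real"
  assumes "\<theta> > 0"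
    and "\<And>T. \<Delta> T > 0"
    and "0 < Liminf at_top (\<lambda>T. ereal (\<Delta> T))"
    and "Limsup at_top (\<lambda>T. ereal (\<Delta> T)) \<le> ereal (1 / (4 * \<theta>))"
  shows "Liminf at_top (\<lambda>T. ereal ((inverse (I0 T \<theta>) + inverse (Iinf T (\<Delta> T) \<theta>))
                                   / inverse (IDelta T (\<Delta> T) \<theta>))) > 1"
proof -
  obtain c where c: "0 < ereal c" "ereal c < Liminf at_top (\<lambda>T. ereal (\<Delta> T))"
    using ereal_dense2[OF assms(3)] by blast
  have c0: "c > 0" using c(1) by simp
  have ev1: "eventually (\<lambda>T. c < \<Delta> T) at_top"
    using less_LiminfD[OF c(2)] by simp
  have "Limsup at_top (\<lambda>T. ereal (\<Delta> T)) < ereal (1/\<theta>)"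
  proof (rule order.strict_trans1[OF assms(4)])
    show "ereal (1 / (4 * \<theta>)) < ereal (1/\<theta>)" using assms(1) by (simp add: divide_simps)
  qed
  then have ev2: "eventually (\<lambda>T. \<Delta> T < 1/\<theta>) at_top"
    using Limsup_lessD by fastforce
  define a where "a = \<theta> * c"
  have a0: "a > 0" unfolding a_def using assms(1) c0 by simp
  define \<delta> where "\<delta> = a * exp (-1) * (a/6)^2"
  have d0: "\<delta> > 0" unfolding \<delta>_def using a0 by simp
  have "eventually (\<lambda>T. ereal (1 + \<delta>) \<le> ereal ((inverse (I0 T \<theta>) + inverse (Iinf T (\<Delta> T) \<theta>))
                                   / inverse (IDelta T (\<Delta> T) \<theta>))) at_top"
    using ev1 ev2 eventually_gt_at_top[of 0]
  proof eventually_elim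
    case (elim T)
    define D where "D = \<Delta> T"
    define x where "x = \<theta> * D"
    have D0: "D > 0" unfolding D_def by (rule assms(2))
    have xa: "a \<le> x" unfolding x_def a_def D_def using elim(1) assms(1) by simp
    have x1: "x \<le> 1" unfolding x_def D_def using elim(2) assms(1) by (simp add: field_simps)
    have ratio: "(inverse (I0 T \<theta>) + inverse (Iinf T D \<theta>)) / inverse (IDelta T D \<theta>)
        = (x + 2*x^2) * phi \<theta> D"
      unfolding I0_def Iinf_def IDelta_def x_def using elim(3) assms(1) D0
      by (simp add: field_simps power2_eq_square)
    show ?case unfolding D_def[symmetric] ratio
      using lower[OF a0 xa x1] unfolding phi_eq x_def \<delta>_def by simp
  qed
  then have "ereal (1 + \<delta>) \<le> Liminf at_top (\<lambda>T. ereal ((inverse (I0 T \<theta>) + inverse (Iinf T (\<Delta> T) \<theta>))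
                                   / inverse (IDelta T (\<Delta> T) \<theta>)))"
    by (rule Liminf_bounded)
  moreover have "(1::ereal) < ereal (1 + \<delta>)" using d0 by simp
  ultimately show ?thesis using order.strict_trans2 by blast
qed

end
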